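(* Let $X$ be a locally compact metrizable space, and write $X = X_p \cup X_s$ for its unique decomposition into a disjoint union of a perfect set $X_p$ and a scattered set $X_s$. Then the hypocompact radical of the commutative Banach algebra $C_0(X)$ is $$C_0(X)_{hc} = \{ f \in C_0(X) : f(x) = 0 \text{ for all } x \in X_p \}.$$
   Context: For a Banach algebra $\mathcal B$, an element $a\in\mathcal B$ is called compact if the map $M_{a,a}:\mathcal B\to\mathcal B$, $x\mapsto axa$, is a compact operator. A Banach algebra $\mathcal B$ is hypocompact if every nonzero quotient $\mathcal B/\mathcal J$ by a closed two-sided ideal $\mathcal J$ contains a nonzero compact element; an ideal is hypocompact if it is hypocompact as an algebra. Every Banach algebra $\mathcal B$ has a largest hypocompact ideal, which is closed; it is called the hypocompact radical and denoted $\mathcal B_{hc}$. A subset $Y$ of a topological space is dense in itself if it has no isolated points (in the relative topology), perfect if it is closed and dense in itself, and scattered if it contains no nonempty dense-in-itself subsets. Every space $X$ is uniquely the disjoint union $X=X_p\cup X_s$ of a perfect set $X_p$ and a scattered set $X_s$. *)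

theory Defs
  imports "HOL-Analysis.Analysis"
begin

definition dense_in_itself :: "'a::topological_space set \<Rightarrow> bool" where
  "dense_in_itself Y \<longleftrightarrow> (\<forall>y\<in>Y. y islimpt Y)"

definition perfect_set :: "'a::topological_space set \<Rightarrow> bool" where
  "perfect_set Y \<longleftrightarrow> closed Y \<and> dense_in_itself Y"

definition scattered_set :: "'a::topological_space set \<Rightarrow> bool" where
  "scattered_set S \<longleftrightarrow> (\<forall>Y. Y \<subseteq> S \<and> Y \<noteq> {} \<longrightarrow> \<not> dense_in_itself Y)"

definition perfect_part :: "'a::topological_space set" where
  "perfect_part = (THE P. perfect_set P \<and> scattered_set (UNIV - P))"

definition C0 :: "('a::topological_space \<Rightarrow> complex) set" where
  "C0 = {f. continuous_on UNIV f \<and> (\<forall>e>0. compact {x. e \<le> norm (f x)})}"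

definition supn :: "('a \<Rightarrow> complex) \<Rightarrow> real" where
  "supn f = (SUP x. norm (f x))"

definition qnorm :: "('a \<Rightarrow> complex) set \<Rightarrow> ('a \<Rightarrow> complex) \<Rightarrow> real" where
  "qnorm J f = (INF g\<in>J. supn (\<lambda>x. f x - g x))"

definition ideal_of :: "('a \<Rightarrow> complex) set \<Rightarrow> ('a \<Rightarrow> complex) set \<Rightarrow> bool" where
  "ideal_of A I \<longleftrightarrow> I \<subseteq> A \<and> (\<lambda>x. 0) \<in> I
     \<and> (\<forall>f\<in>I. \<forall>g\<in>I. (\<lambda>x. f x + g x) \<in> I)
     \<and> (\<forall>c. \<forall>f\<in>I. (\<lambda>x. c * f x) \<in> I)
     \<and> (\<forall>a\<in>A. \<forall>f\<in>I. (\<lambda>x. a x * f x) \<in> I \<and> (\<lambda>x. f x * a x) \<in> I)"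

definition closed_ideal_of :: "('a \<Rightarrow> complex) set \<Rightarrow> ('a \<Rightarrow> complex) set \<Rightarrow> bool" where
  "closed_ideal_of A J \<longleftrightarrow> ideal_of A J
     \<and> (\<forall>f\<in>A. (\<forall>e>0. \<exists>g\<in>J. supn (\<lambda>x. f x - g x) < e) \<longrightarrow> f \<in> J)"

text \<open>The coset a + J is a compact element of A/J: the operator
  x + J \<mapsto> a x a + J maps the closed unit ball of A/J onto a totally
  bounded (precompact) subset of A/J.\<close>
definition compact_elem :: "('a \<Rightarrow> complex) set \<Rightarrow> ('a \<Rightarrow> complex) set \<Rightarrow> ('a \<Rightarrow> complex) \<Rightarrow> bool" where
  "compact_elem A J a \<longleftrightarrow>
     (\<forall>e>0. \<exists>F. finite F \<and> F \<subseteq> A \<and>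
        (\<forall>x\<in>A. qnorm J x \<le> 1 \<longrightarrow> (\<exists>y\<in>F. qnorm J (\<lambda>t. a t * x t * a t - y t) < e)))"

definition hypocompact :: "('a \<Rightarrow> complex) set \<Rightarrow> bool" where
  "hypocompact A \<longleftrightarrow>
     (\<forall>J. closed_ideal_of A J \<and> J \<noteq> A \<longrightarrow> (\<exists>a\<in>A. a \<notin> J \<and> compact_elem A J a))"

definition hc_radical :: "('a \<Rightarrow> complex) set \<Rightarrow> ('a \<Rightarrow> complex) set" where
  "hc_radical A = (THE I. ideal_of A I \<and> hypocompact I
      \<and> (\<forall>K. ideal_of A K \<and> hypocompact K \<longrightarrow> K \<subseteq> I))"

end

theory Submission
  imports Defs
begin

definition PK :: "'a::topological_space set" where
  "PK = \<Union>{D. dense_in_itself D}"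

lemma sub_PK: "dense_in_itself D \<Longrightarrow> D \<subseteq> PK"
  unfolding PK_def by blast

lemma dii_PK: "dense_in_itself (PK::'a::topological_space set)"
  unfolding dense_in_itself_def
proof
  fix y :: 'a assume "y \<in> PK"
  then obtain D where D: "dense_in_itself D" "y \<in> D" unfolding PK_def by blast
  hence "y islimpt D" unfolding dense_in_itself_def by blast
  moreover have "D \<subseteq> PK" using D(1) by (rule sub_PK)
  ultimately show "y islimpt PK" by (rule islimpt_subset)
qed

lemma dii_closure: "dense_in_itself D \<Longrightarrow> dense_in_itself (closure D)"
  unfolding dense_in_itself_def
proof
  fix y assume D: "\<forall>y\<in>D. y islimpt D" and y: "y \<in> closure D"
  have "y islimpt D"
  proof (cases "y \<in> D")
    case True thus ?thesis using D by blast
  next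
    case False thus ?thesis using y unfolding closure_def by blast
  qed
  thus "y islimpt closure D" using closure_subset by (rule islimpt_subset)
qed

lemma closed_PK: "closed (PK::'a::topological_space set)"
proof -
  have "closure (PK::'a set) \<subseteq> PK"
    by (rule sub_PK[OF dii_closure[OF dii_PK]])
  thus ?thesis using closure_subset_eq by blast
qed

lemma scat_PK: "scattered_set (UNIV - (PK::'a::topological_space set))"
  unfolding scattered_set_def
proof (intro allI impI)
  fix Y :: "'a set" assume Y: "Y \<subseteq> UNIV - PK \<and> Y \<noteq> {}"
  show "\<not> dense_in_itself Y"
  proof
    assume "dense_in_itself Y"
    hence "Y \<subseteq> PK" by (rule sub_PK)
    thus False using Y by blast
  qed
qed

lemma pp_eq: "perfect_part = (PK::'a::topological_space set)"
  unfolding perfect_part_def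
proof (rule the_equality)
  show "perfect_set (PK::'a set) \<and> scattered_set (UNIV - PK)"
    unfolding perfect_set_def using closed_PK dii_PK scat_PK by simp
next
  fix P :: "'a set" assume a: "perfect_set P \<and> scattered_set (UNIV - P)"
  have 1: "P \<subseteq> PK" using a unfolding perfect_set_def by (intro sub_PK) simp
  have "PK - P = {}"
  proof (rule ccontr)
    assume ne: "PK - P \<noteq> {}"
    have "dense_in_itself (PK - P)"
      unfolding dense_in_itself_def
    proof
      fix y assume y: "y \<in> PK - P"
      hence yl: "y islimpt PK" using dii_PK unfolding dense_in_itself_def by blast
      show "y islimpt (PK - P)"
      proof (rule islimptI)
        fix T assume "y \<in> T" "open T"
        moreover have "open (- P)" using a unfolding perfect_set_def by auto
        ultimately have "y \<in> T \<inter> - P" "open (T \<inter> - P)" using y by auto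
        then obtain w where "w \<in> PK" "w \<in> T \<inter> - P" "w \<noteq> y"
          by (rule islimptE[OF yl])
        thus "\<exists>w\<in>PK - P. w \<in> T \<and> w \<noteq> y" by auto
      qed
    qed
    moreover have "PK - P \<subseteq> UNIV - P" by blast
    ultimately show False using a ne unfolding scattered_set_def by (meson order_refl)
  qed
  thus "P = PK" using 1 by blast
qed

lemma pp_closed: "closed (perfect_part::'a::topological_space set)"
  unfolding pp_eq by (rule closed_PK)
lemma pp_limpt: "p \<in> (perfect_part::'a::topological_space set) \<Longrightarrow> p islimpt perfect_part"
  unfolding pp_eq using dii_PK unfolding dense_in_itself_def by blast
lemma pp_scat: "scattered_set (UNIV - (perfect_part::'a::topological_space set))"
  unfolding pp_eq by (rule scat_PK)


definition bnd :: "('a \<Rightarrow> complex) \<Rightarrow> bool" where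
  "bnd h \<longleftrightarrow> (\<exists>B. \<forall>x. norm (h x) \<le> B)"

lemma supn_ge: "bnd h \<Longrightarrow> norm (h x) \<le> supn h"
  unfolding supn_def bnd_def by (auto intro!: cSUP_upper bdd_aboveI2)

lemma supn_le: "(\<And>x. norm (h x) \<le> B) \<Longrightarrow> supn h \<le> B"
  unfolding supn_def by (auto intro!: cSUP_least)

lemma supn_nonneg: "bnd h \<Longrightarrow> 0 \<le> supn h"
  using supn_ge[of h undefined] norm_ge_zero order_trans by blast

lemma C0_cont: "f \<in> C0 \<Longrightarrow> continuous_on UNIV f"
  unfolding C0_def by auto

lemma closed_lev: "continuous_on UNIV f \<Longrightarrow> closed {x. e \<le> norm (f x::complex)}"
  by (intro closed_Collect_le continuous_on_const continuous_on_norm)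

lemma C0I:
  assumes "continuous_on UNIV g"
    and "\<And>e. e > 0 \<Longrightarrow> \<exists>S. compact S \<and> {x. e \<le> norm (g x)} \<subseteq> S"
  shows "g \<in> C0"
proof -
  have "compact {x. e \<le> norm (g x)}" if "e > 0" for e
  proof -
    from assms(2)[OF that] obtain S where S: "compact S" "{x. e \<le> norm (g x)} \<subseteq> S"
      by (elim exE conjE)
    have "compact (S \<inter> {x. e \<le> norm (g x)})"
      by (rule compact_Int_closed[OF S(1) closed_lev[OF assms(1)]])
    moreover have "S \<inter> {x. e \<le> norm (g x)} = {x. e \<le> norm (g x)}" using S(2) by (rule Int_absorb1)
    ultimately show ?thesis by simp
  qed
  then show ?thesis unfolding C0_def using assms(1) by blast
qed

lemma C0_lev: "f \<in> C0 \<Longrightarrow> e > 0 \<Longrightarrow> compact {x. e \<le> norm (f x)}"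
  unfolding C0_def by auto

lemma C0_bnd: "f \<in> C0 \<Longrightarrow> bnd f"
proof -
  assume f: "f \<in> C0"
  have "compact (f ` {x. 1 \<le> norm (f x)})"
    using C0_lev[OF f, of 1] C0_cont[OF f]
    by (intro compact_continuous_image) (auto intro: continuous_on_subset)
  hence "bounded (f ` {x. 1 \<le> norm (f x)})" by (rule compact_imp_bounded)
  then obtain B where B: "\<forall>y\<in>f ` {x. 1 \<le> norm (f x)}. norm y \<le> B"
    unfolding bounded_iff by blast
  have "norm (f x) \<le> max 1 B" for x
    using B by (cases "1 \<le> norm (f x)") force+
  thus ?thesis unfolding bnd_def by blast
qed

lemma C0_weak:
  assumes "continuous_on UNIV g" "f \<in> C0"
    and "\<And>e. e > 0 \<Longrightarrow> \<exists>e'>0. \<forall>x. e \<le> norm (g x) \<longrightarrow> e' \<le> norm (f x)"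
  shows "g \<in> C0"
proof (rule C0I[OF assms(1)])
  fix e :: real assume "e > 0"
  then obtain e' where "e' > 0" "\<forall>x. e \<le> norm (g x) \<longrightarrow> e' \<le> norm (f x)" using assms(3) by blast
  thus "\<exists>S. compact S \<and> {x. e \<le> norm (g x)} \<subseteq> S"
    using C0_lev[OF assms(2) \<open>e' > 0\<close>] by blast
qed

lemma C0_zero: "(\<lambda>x. 0) \<in> C0"
  by (rule C0I) auto

lemma C0_add:
  assumes f: "f \<in> C0" and g: "g \<in> C0"
  shows "(\<lambda>x. f x + g x) \<in> C0"
proof (rule C0I)
  show "continuous_on UNIV (\<lambda>x. f x + g x)"
    using C0_cont[OF f] C0_cont[OF g] by (intro continuous_intros)
  fix e :: real assume e: "e > 0"
  have "{x. e \<le> norm (f x + g x)} \<subseteq> {x. e/2 \<le> norm (f x)} \<union> {x. e/2 \<le> norm (g x)}"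
  proof
    fix x assume "x \<in> {x. e \<le> norm (f x + g x)}"
    hence "e \<le> norm (f x) + norm (g x)" using norm_triangle_ineq order_trans by blast
    thus "x \<in> {x. e/2 \<le> norm (f x)} \<union> {x. e/2 \<le> norm (g x)}" by auto
  qed
  moreover have "compact ({x. e/2 \<le> norm (f x)} \<union> {x. e/2 \<le> norm (g x)})"
    using C0_lev[OF f, of "e/2"] C0_lev[OF g, of "e/2"] e by (intro compact_Un) auto
  ultimately show "\<exists>S. compact S \<and> {x. e \<le> norm (f x + g x)} \<subseteq> S" by blast
qed

lemma C0_mult:
  assumes f: "f \<in> C0" and g: "g \<in> C0"
  shows "(\<lambda>x. f x * g x) \<in> C0"
proof -
  obtain B where B: "\<And>x. norm (f x) \<le> B" using C0_bnd[OF f] unfolding bnd_def by blast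
  have B0: "0 \<le> B" using B[of undefined] norm_ge_zero order_trans by blast
  show ?thesis
  proof (rule C0_weak[OF _ g])
    show "continuous_on UNIV (\<lambda>x. f x * g x)"
      using C0_cont[OF f] C0_cont[OF g] by (intro continuous_intros)
    fix e :: real assume e: "e > 0"
    show "\<exists>e'>0. \<forall>x. e \<le> norm (f x * g x) \<longrightarrow> e' \<le> norm (g x)"
    proof (intro exI[of _ "e/(B+1)"] conjI allI impI)
      show "0 < e/(B+1)" using e B0 by simp
      fix x assume "e \<le> norm (f x * g x)"
      hence "e \<le> (B+1) * norm (g x)"
        using B[of x] by (smt (verit) mult_right_mono norm_ge_zero norm_mult)
      thus "e/(B+1) \<le> norm (g x)" using B0 by (simp add: divide_le_eq mult.commute)
    qed
  qed
qed

lemma C0_scale: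
  assumes f: "f \<in> C0" shows "(\<lambda>x. c * f x) \<in> C0"
proof -
  show ?thesis
  proof (rule C0_weak[OF _ f])
    show "continuous_on UNIV (\<lambda>x. c * f x)" using C0_cont[OF f] by (intro continuous_intros)
    fix e :: real assume e: "e > 0"
    show "\<exists>e'>0. \<forall>x. e \<le> norm (c * f x) \<longrightarrow> e' \<le> norm (f x)"
    proof (intro exI[of _ "e/(norm c+1)"] conjI allI impI)
      show "0 < e/(norm c+1)" using e by (simp add: add_nonneg_pos)
      fix x assume "e \<le> norm (c * f x)"
      hence "e \<le> (norm c+1) * norm (f x)"
        by (smt (verit) mult_right_mono norm_ge_zero norm_mult)
      thus "e/(norm c+1) \<le> norm (f x)"
        by (simp add: divide_le_eq mult.commute add_nonneg_pos)
    qed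
  qed
qed

lemma C0_diff:
  assumes f: "f \<in> C0" and g: "g \<in> C0"
  shows "(\<lambda>x. f x - g x) \<in> C0"
  using C0_add[OF f C0_scale[OF g, of "-1"]] by simp

lemma C0_cnj:
  assumes f: "f \<in> C0" shows "(\<lambda>x. cnj (f x)) \<in> C0"
  by (rule C0_weak[OF _ f]) (use C0_cont[OF f] in \<open>auto intro!: continuous_intros\<close>)

lemma bnd_diff: "bnd f \<Longrightarrow> bnd g \<Longrightarrow> bnd (\<lambda>x. f x - g x)"
  unfolding bnd_def by (metis norm_triangle_ineq4 add_mono order_trans)

lemma qnorm_le:
  assumes "g \<in> J" "J \<subseteq> C0" "f \<in> C0"
  shows "qnorm J f \<le> supn (\<lambda>x. f x - g x)"
  unfolding qnorm_def
proof (rule cINF_lower[OF _ assms(1)])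
  show "bdd_below ((\<lambda>g. supn (\<lambda>x. f x - g x)) ` J)"
    using assms by (intro bdd_belowI2[of _ 0]) (metis subsetD supn_nonneg bnd_diff C0_bnd)
qed

lemma qnorm_ge:
  assumes "J \<noteq> {}" "\<And>g. g \<in> J \<Longrightarrow> L \<le> supn (\<lambda>x. f x - g x)"
  shows "L \<le> qnorm J f"
  unfolding qnorm_def using assms by (intro cINF_greatest) auto

lemma qnorm_pt:
  assumes "J \<noteq> {}" "J \<subseteq> C0" "f \<in> C0" "\<And>g. g \<in> J \<Longrightarrow> g t = 0"
  shows "norm (f t) \<le> qnorm J f"
proof (rule qnorm_ge[OF assms(1)])
  fix g assume g: "g \<in> J"
  have "norm (f t) = norm (f t - g t)" using assms(4)[OF g] by simp
  also have "\<dots> \<le> supn (\<lambda>x. f x - g x)"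
    using g assms by (intro supn_ge bnd_diff C0_bnd) auto
  finally show "norm (f t) \<le> supn (\<lambda>x. f x - g x)" .
qed

definition I0 :: "('a::topological_space \<Rightarrow> complex) set" where
  "I0 = {f\<in>C0. \<forall>x\<in>perfect_part. f x = 0}"

lemma I0_C0: "I0 \<subseteq> C0" unfolding I0_def by auto

lemma I0_ideal: "ideal_of C0 (I0::('a::topological_space \<Rightarrow> complex) set)"
  unfolding ideal_of_def
proof (intro conjI ballI allI)
  show "I0 \<subseteq> C0" by (rule I0_C0)
  show "(\<lambda>x. 0) \<in> I0" unfolding I0_def using C0_zero by simp
  fix f :: "'a \<Rightarrow> complex" assume f: "f \<in> I0"
  hence fC: "f \<in> C0" and fz: "\<forall>x\<in>perfect_part. f x = 0" unfolding I0_def by auto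
  { fix g :: "'a \<Rightarrow> complex" assume "g \<in> I0"
    hence gC: "g \<in> C0" and gz: "\<forall>x\<in>perfect_part. g x = 0" unfolding I0_def by auto
    show "(\<lambda>x. f x + g x) \<in> I0" unfolding I0_def using C0_add[OF fC gC] fz gz by simp }
  { fix c :: complex
    show "(\<lambda>x. c * f x) \<in> I0" unfolding I0_def using C0_scale[OF fC] fz by simp }
  { fix a :: "'a \<Rightarrow> complex" assume aC: "a \<in> C0"
    show "(\<lambda>x. a x * f x) \<in> I0" unfolding I0_def using C0_mult[OF aC fC] fz by simp
    show "(\<lambda>x. f x * a x) \<in> I0" unfolding I0_def using C0_mult[OF fC aC] fz by simp }
qed

lemma approx:
  fixes J :: "('a::metric_space \<Rightarrow> complex) set"
  assumes cl: "closed_ideal_of I0 J" and h: "h \<in> I0"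
    and van: "\<And>t. (\<forall>g\<in>J. g t = 0) \<Longrightarrow> h t = 0"
  shows "h \<in> J"
proof -
  have id: "ideal_of I0 J" using cl unfolding closed_ideal_of_def by auto
  have JI: "J \<subseteq> I0" and J0: "(\<lambda>x. 0) \<in> J"
    and Jadd: "\<And>f g. f \<in> J \<Longrightarrow> g \<in> J \<Longrightarrow> (\<lambda>x. f x + g x) \<in> J"
    and Jmul: "\<And>a f. a \<in> I0 \<Longrightarrow> f \<in> J \<Longrightarrow> (\<lambda>x. a x * f x) \<in> J"
    using id unfolding ideal_of_def by auto
  have hC: "h \<in> C0" using h I0_C0 by auto
  have hc: "continuous_on UNIV h" using C0_cont[OF hC] .
  obtain B where B: "\<And>x. norm (h x) \<le> B" using C0_bnd[OF hC] unfolding bnd_def by blast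
  have B0: "0 \<le> B" using B[of undefined] norm_ge_zero order_trans by blast
  have "\<exists>g\<in>J. supn (\<lambda>x. h x - g x) < e" if e: "e > 0" for e
  proof -
    define \<epsilon> where "\<epsilon> = e/2"
    have \<epsilon>: "\<epsilon> > 0" "\<epsilon> < e" using e unfolding \<epsilon>_def by auto
    define K where "K = {x. \<epsilon> \<le> norm (h x)}"
    have Kc: "compact K" unfolding K_def using C0_lev[OF hC \<epsilon>(1)] .
    show ?thesis
    proof (cases "K = {}")
      case True
      have "supn (\<lambda>x. h x - 0) \<le> \<epsilon>"
        by (rule supn_le) (use True in \<open>simp add: K_def, meson less_imp_le not_le\<close>)
      thus ?thesis using J0 \<epsilon> by force
    next
      case False
      have cov: "K \<subseteq> (\<Union>g\<in>J. {x. g x \<noteq> 0})"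
      proof
        fix t assume "t \<in> K"
        hence "h t \<noteq> 0" using \<epsilon> unfolding K_def by auto
        thus "t \<in> (\<Union>g\<in>J. {x. g x \<noteq> 0})" using van by blast
      qed
      have opn: "open {x. g x \<noteq> 0}" if "g \<in> J" for g
        using that JI I0_C0 C0_cont by (intro open_Collect_neq) auto
      obtain G where G: "G \<subseteq> J" "finite G" "K \<subseteq> (\<Union>g\<in>G. {x. g x \<noteq> 0})"
        using compactE_image[OF Kc opn cov] by blast
      define jr where "jr = (\<lambda>t. \<Sum>g\<in>G. (norm (g t))^2)"
      define j where "j = (\<lambda>t. complex_of_real (jr t))"
      have GC: "g \<in> C0" if "g \<in> G" for g using that G JI I0_C0 by auto
      have jrc: "continuous_on UNIV jr"
        unfolding jr_def using GC C0_cont by (intro continuous_intros) auto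
      have jr0: "jr t \<ge> 0" for t unfolding jr_def by (simp add: sum_nonneg)
      have j_eq: "j = (\<lambda>t. \<Sum>g\<in>G. cnj (g t) * g t)"
      proof
        fix t
        have "complex_of_real (jr t) = (\<Sum>g\<in>G. complex_of_real ((norm (g t))^2))"
          unfolding jr_def by (rule of_real_sum)
        also have "\<dots> = (\<Sum>g\<in>G. cnj (g t) * g t)"
        proof (rule sum.cong[OF refl])
          fix g show "complex_of_real ((norm (g t))^2) = cnj (g t) * g t"
            using complex_norm_square[of "g t"] by (simp only: mult.commute)
        qed
        finally show "j t = (\<Sum>g\<in>G. cnj (g t) * g t)" unfolding j_def .
      qed
      have sumJ: "finite H \<Longrightarrow> H \<subseteq> G \<Longrightarrow> (\<lambda>t. \<Sum>g\<in>H. cnj (g t) * g t) \<in> J" for H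
      proof (induction H rule: finite_induct)
        case empty thus ?case using J0 by simp
      next
        case (insert g H)
        have "g \<in> J" using insert G by auto
        moreover have "(\<lambda>t. cnj (g t)) \<in> I0" using \<open>g \<in> J\<close> JI C0_cnj unfolding I0_def by auto
        ultimately have c: "(\<lambda>t. cnj (g t) * g t) \<in> J" using Jmul by blast
        have "H \<subseteq> G" using insert.prems by simp
        hence ih: "(\<lambda>t. \<Sum>g\<in>H. cnj (g t) * g t) \<in> J" by (rule insert.IH)
        have "(\<lambda>t. \<Sum>x\<in>insert g H. cnj (x t) * x t) = (\<lambda>t. cnj (g t) * g t + (\<Sum>x\<in>H. cnj (x t) * x t))"
          using insert.hyps by simp
        thus ?case using Jadd[OF c ih] by simp
      qed
      have jJ: "j \<in> J" using sumJ[OF G(2) order.refl] j_eq by simp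
      obtain t0 where t0: "t0 \<in> K" "\<forall>t\<in>K. jr t0 \<le> jr t"
        using continuous_attains_inf[OF Kc False continuous_on_subset[OF jrc]] by blast
      define m where "m = jr t0"
      obtain g0 where g0: "g0 \<in> G" "g0 t0 \<noteq> 0" using G(3) t0(1) by blast
      have "(norm (g0 t0))^2 \<le> jr t0"
        unfolding jr_def using G(2) g0(1) by (intro member_le_sum) auto
      hence m0: "m > 0" using g0 unfolding m_def by (smt (verit) zero_less_norm_iff zero_less_power)
      define \<delta> where "\<delta> = m * \<epsilon> / (B + 1)"
      have \<delta>: "\<delta> > 0" unfolding \<delta>_def using m0 \<epsilon> B0 by simp
      define q where "q = (\<lambda>t. h t / (j t + complex_of_real \<delta>))"
      have den: "j t + complex_of_real \<delta> = complex_of_real (jr t + \<delta>)" for t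
        unfolding j_def by simp
      have denp: "jr t + \<delta> > 0" for t using jr0[of t] \<delta> by simp
      have Dnz: "j t + complex_of_real \<delta> \<noteq> 0" for t
        unfolding den of_real_eq_0_iff using denp[of t] by linarith
      have nq: "norm (q t) = norm (h t) / (jr t + \<delta>)" for t
        unfolding q_def den by (simp only: norm_divide norm_of_real abs_of_pos[OF denp[of t]])
      have jc: "continuous_on UNIV j" unfolding j_def using jrc by (intro continuous_intros)
      have qc: "continuous_on UNIV q"
        unfolding q_def
      proof (rule continuous_on_divide[OF hc])
        show "continuous_on UNIV (\<lambda>t. j t + complex_of_real \<delta>)"
          using jc by (intro continuous_on_add continuous_on_const)
        show "\<forall>x\<in>UNIV. j x + complex_of_real \<delta> \<noteq> 0" using Dnz by blast
      qed
      have qb: "norm (q x) \<le> norm (h x) / \<delta>" for x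
      proof -
        have "norm (h x) / (jr x + \<delta>) \<le> norm (h x) / \<delta>"
          by (rule divide_left_mono) (use jr0[of x] \<delta> in auto)
        thus ?thesis using nq[of x] by simp
      qed
      have qC: "q \<in> C0"
      proof (rule C0_weak[OF qc hC])
        fix e' :: real assume "e' > 0"
        show "\<exists>e''>0. \<forall>x. e' \<le> norm (q x) \<longrightarrow> e'' \<le> norm (h x)"
        proof (intro exI[of _ "e' * \<delta>"] conjI allI impI)
          show "0 < e' * \<delta>" using \<open>e' > 0\<close> \<delta> by simp
          fix x assume "e' \<le> norm (q x)"
          hence "e' \<le> norm (h x) / \<delta>" using qb[of x] by linarith
          thus "e' * \<delta> \<le> norm (h x)" using \<delta> by (simp add: le_divide_eq)
        qed
      qed
      have qI: "q \<in> I0"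
      proof -
        have "\<forall>x\<in>perfect_part. q x = 0"
          using h unfolding I0_def q_def by simp
        thus ?thesis using qC unfolding I0_def by simp
      qed
      define g where "g = (\<lambda>t. q t * j t)"
      have gJ: "g \<in> J" unfolding g_def using Jmul[OF qI jJ] .
      have diff: "norm (h t - g t) = norm (h t) * \<delta> / (jr t + \<delta>)" for t
      proof -
        have "h t - g t = h t * complex_of_real \<delta> / (j t + complex_of_real \<delta>)"
          unfolding g_def q_def using Dnz[of t] by (simp add: field_simps)
        also have "norm \<dots> = norm (h t) * \<delta> / (jr t + \<delta>)"
          unfolding den by (simp only: norm_divide norm_mult norm_of_real abs_of_pos[OF denp[of t]] abs_of_pos[OF \<delta>])
        finally show ?thesis .
      qed
      have "norm (h t - g t) \<le> \<epsilon>" for t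
      proof (cases "t \<in> K")
        case True
        hence "m \<le> jr t" using t0 unfolding m_def by auto
        hence "norm (h t) * \<delta> / (jr t + \<delta>) \<le> B * \<delta> / m"
          using B[of t] \<delta> m0 jr0[of t] B0
          by (intro frac_le mult_right_mono) auto
        also have "\<dots> = B * \<epsilon> / (B + 1)" unfolding \<delta>_def using m0 by simp
        also have "\<dots> \<le> \<epsilon>" using B0 \<epsilon> by (simp add: divide_le_eq)
        finally show ?thesis using diff by simp
      next
        case False
        hence "norm (h t) < \<epsilon>" unfolding K_def by auto
        moreover have "\<delta> / (jr t + \<delta>) \<le> 1" using jr0[of t] \<delta> by simp
        ultimately have "norm (h t) * (\<delta> / (jr t + \<delta>)) \<le> \<epsilon>"
          by (smt (verit) mult_left_le norm_ge_zero)
        thus ?thesis using diff by simp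
      qed
      hence "supn (\<lambda>x. h x - g x) \<le> \<epsilon>" by (rule supn_le)
      thus ?thesis using gJ \<epsilon> by force
    qed
  qed
  thus ?thesis using cl h unfolding closed_ideal_of_def by blast
qed

lemma hypo_I0:
  assumes lc: "locally_compact_space (euclidean :: 'a::metric_space topology)"
  shows "hypocompact (I0 :: ('a \<Rightarrow> complex) set)"
  unfolding hypocompact_def
proof (intro allI impI)
  fix J :: "('a \<Rightarrow> complex) set" assume "closed_ideal_of I0 J \<and> J \<noteq> I0"
  hence cl: "closed_ideal_of I0 J" and ne: "J \<noteq> I0" by auto
  have id: "ideal_of I0 J" using cl unfolding closed_ideal_of_def by auto
  have JI: "J \<subseteq> I0" and J0: "(\<lambda>x. 0) \<in> J" using id unfolding ideal_of_def by auto
  have JC: "J \<subseteq> C0" using JI I0_C0 by blast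
  have Jne: "J \<noteq> {}" using J0 by blast
  define Z where "Z = {t. \<forall>g\<in>J. g t = 0}"
  have Zne: "Z - perfect_part \<noteq> {}"
  proof
    assume e: "Z - perfect_part = {}"
    have "I0 \<subseteq> J"
    proof
      fix h :: "'a \<Rightarrow> complex" assume h: "h \<in> I0"
      show "h \<in> J"
      proof (rule approx[OF cl h])
        fix t assume "\<forall>g\<in>J. g t = 0"
        hence "t \<in> Z" unfolding Z_def by simp
        hence "t \<in> perfect_part" using e by blast
        thus "h t = 0" using h unfolding I0_def by simp
      qed
    qed
    thus False using JI ne by blast
  qed
  have "Z - perfect_part \<subseteq> UNIV - perfect_part" by blast
  hence "\<not> dense_in_itself (Z - perfect_part)"
    using pp_scat Zne unfolding scattered_set_def by blast
  then obtain z where z: "z \<in> Z - perfect_part" "\<not> z islimpt (Z - perfect_part)"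
    unfolding dense_in_itself_def by blast
  have "\<exists>T. z \<in> T \<and> open T \<and> (\<forall>y\<in>Z - perfect_part. y \<in> T \<longrightarrow> y = z)"
  proof (rule ccontr)
    assume na: "\<not> ?thesis"
    have "z islimpt (Z - perfect_part)"
    proof (rule islimptI)
      fix T assume "z \<in> T" "open T"
      thus "\<exists>y\<in>Z - perfect_part. y \<in> T \<and> y \<noteq> z" using na by blast
    qed
    thus False using z(2) by simp
  qed
  then obtain T where T: "z \<in> T" "open T" "\<forall>y\<in>Z - perfect_part. y \<in> T \<longrightarrow> y = z"
    by blast
  define V where "V = T - perfect_part"
  have Vo: "open V" unfolding V_def using T(2) pp_closed by (rule open_Diff)
  have zV: "z \<in> V" using z T unfolding V_def by blast
  have "\<forall>x::'a. \<exists>U. open U \<and> (\<exists>K. compact K \<and> x \<in> U \<and> U \<subseteq> K)"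
    using lc unfolding locally_compact_space_def by simp
  then obtain U K where UK: "open U" "compact K" "z \<in> U" "U \<subseteq> K" by blast
  have "open (U \<inter> V)" using UK(1) Vo by (rule open_Int)
  moreover have "z \<in> U \<inter> V" using UK(3) zV by blast
  ultimately obtain r where r: "r > 0" "ball z r \<subseteq> U \<inter> V"
    by (meson openE)
  define \<rho> where "\<rho> = r / 2"
  have \<rho>: "\<rho> > 0" "\<rho> < r" unfolding \<rho>_def using r by auto
  have cb: "cball z \<rho> \<subseteq> ball z r" using \<rho> by (auto simp: subset_eq)
  have cbK: "cball z \<rho> \<subseteq> K" using cb r(2) UK(4) by blast
  have cbc: "compact (cball z \<rho>)"
  proof -
    have "compact (K \<inter> cball z \<rho>)" using UK(2) closed_cball by (rule compact_Int_closed)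
    moreover have "K \<inter> cball z \<rho> = cball z \<rho>" using cbK by blast
    ultimately show ?thesis by simp
  qed
  define a where "a = (\<lambda>t. complex_of_real (max 0 (1 - dist t z / \<rho>)))"
  have az: "a z = 1" unfolding a_def by simp
  have anorm: "norm (a t) \<le> 1" for t
  proof -
    have "0 \<le> dist t z / \<rho>" using \<rho> by simp
    thus ?thesis unfolding a_def norm_of_real by simp
  qed
  have asupp: "dist t z < \<rho>" if "a t \<noteq> 0" for t
  proof (rule ccontr)
    assume "\<not> dist t z < \<rho>"
    hence "1 \<le> dist t z / \<rho>" using \<rho> by (simp add: le_divide_eq)
    hence "a t = 0" unfolding a_def by simp
    thus False using that by simp
  qed
  have aV: "t \<in> V" if "a t \<noteq> 0" for t
  proof -
    have "t \<in> ball z r" using asupp[OF that] \<rho> by (simp add: dist_commute)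
    thus ?thesis using r(2) by blast
  qed
  have ac: "continuous_on UNIV a"
    unfolding a_def by (intro continuous_intros) (use \<rho> in auto)
  have aC: "a \<in> C0"
  proof (rule C0I[OF ac])
    fix e :: real assume e: "e > 0"
    have "{x. e \<le> norm (a x)} \<subseteq> cball z \<rho>"
    proof
      fix x assume "x \<in> {x. e \<le> norm (a x)}"
      hence "a x \<noteq> 0" using e by auto
      hence "dist x z < \<rho>" by (rule asupp)
      thus "x \<in> cball z \<rho>" by (simp add: dist_commute)
    qed
    thus "\<exists>S. compact S \<and> {x. e \<le> norm (a x)} \<subseteq> S" using cbc by blast
  qed
  have avan: "a t = 0" if "t \<in> perfect_part" for t
    using aV[of t] that unfolding V_def by blast
  have aI: "a \<in> I0" unfolding I0_def using aC avan by blast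
  have zZ: "z \<in> Z" using z(1) by blast
  have anJ: "a \<notin> J"
  proof
    assume "a \<in> J" hence "a z = 0" using zZ unfolding Z_def by blast
    thus False using az by simp
  qed
  define aa where "aa = (\<lambda>t. a t * a t)"
  have aaC: "aa \<in> C0" unfolding aa_def using C0_mult[OF aC aC] .
  have ce: "compact_elem I0 J a"
    unfolding compact_elem_def
  proof (intro allI impI)
    fix \<epsilon> :: real assume \<epsilon>: "\<epsilon> > 0"
    have cov: "cball (0::complex) 1 \<subseteq> (\<Union>c\<in>cball 0 1. ball c \<epsilon>)"
      using \<epsilon> by force
    obtain k where k: "k \<subseteq> cball (0::complex) 1" "finite k" "cball 0 1 \<subseteq> (\<Union>c\<in>k. ball c \<epsilon>)"
      using compactE_image[OF compact_cball[of "0::complex" 1] _ cov] by blast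
    define F where "F = (\<lambda>c. \<lambda>t. c * aa t) ` k"
    have Ff: "finite F" unfolding F_def using k(2) by simp
    have FI: "F \<subseteq> I0"
    proof
      fix y assume "y \<in> F"
      then obtain c where y: "y = (\<lambda>t. c * aa t)" unfolding F_def by blast
      have "y \<in> C0" unfolding y using C0_scale[OF aaC] .
      moreover have "\<forall>x\<in>perfect_part. y x = 0" unfolding y aa_def using avan by simp
      ultimately show "y \<in> I0" unfolding I0_def by blast
    qed
    have "\<forall>x\<in>I0. qnorm J x \<le> 1 \<longrightarrow> (\<exists>y\<in>F. qnorm J (\<lambda>t. a t * x t * a t - y t) < \<epsilon>)"
    proof (intro ballI impI)
      fix x :: "'a \<Rightarrow> complex" assume xI: "x \<in> I0" and xq: "qnorm J x \<le> 1"
      have xC: "x \<in> C0" using xI I0_C0 by blast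
      have "norm (x z) \<le> qnorm J x"
        by (rule qnorm_pt[OF Jne JC xC]) (use zZ in \<open>simp add: Z_def\<close>)
      hence "x z \<in> cball 0 1" using xq by simp
      then obtain c where c: "c \<in> k" "x z \<in> ball c \<epsilon>" using k(3) by blast
      have cn: "norm (x z - c) < \<epsilon>" using c(2) by (simp add: dist_norm norm_minus_commute)
      define w where "w = (\<lambda>t. a t * x t * a t - c * aa t)"
      define jj where "jj = (\<lambda>t. a t * x t * a t - x z * aa t)"
      have wC: "w \<in> C0" unfolding w_def
        by (intro C0_diff C0_mult C0_scale aC xC aaC)
      have jjC: "jj \<in> C0" unfolding jj_def
        by (intro C0_diff C0_mult C0_scale aC xC aaC)
      have jjI: "jj \<in> I0" unfolding I0_def jj_def aa_def using jjC avan
        by (simp add: jj_def aa_def)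
      have jjJ: "jj \<in> J"
      proof (rule approx[OF cl jjI])
        fix t assume "\<forall>g\<in>J. g t = 0"
        hence tZ: "t \<in> Z" unfolding Z_def by simp
        show "jj t = 0"
        proof (cases "t = z")
          case True thus ?thesis unfolding jj_def aa_def by simp
        next
          case False
          have "a t = 0"
          proof (rule ccontr)
            assume "a t \<noteq> 0"
            hence "t \<in> V" by (rule aV)
            hence "t \<in> T" "t \<notin> perfect_part" unfolding V_def by auto
            hence "t = z" using T(3) tZ by blast
            thus False using False by simp
          qed
          thus ?thesis unfolding jj_def aa_def by simp
        qed
      qed
      have "qnorm J w \<le> supn (\<lambda>t. w t - jj t)" by (rule qnorm_le[OF jjJ JC wC])
      also have "\<dots> \<le> norm (x z - c)"
      proof (rule supn_le)
        fix t
        have "w t - jj t = (x z - c) * (a t * a t)" unfolding w_def jj_def aa_def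
          by (simp add: algebra_simps)
        hence "norm (w t - jj t) = norm (x z - c) * (norm (a t) * norm (a t))"
          by (simp add: norm_mult)
        also have "\<dots> \<le> norm (x z - c) * 1"
        proof (rule mult_left_mono)
          show "norm (a t) * norm (a t) \<le> 1"
            using anorm[of t] by (simp add: mult_le_one)
        qed simp
        finally show "norm (w t - jj t) \<le> norm (x z - c)" by simp
      qed
      finally have q1: "qnorm J w < \<epsilon>" using cn by simp
      have q2: "(\<lambda>t. c * aa t) \<in> F" unfolding F_def using c(1) by blast
      show "\<exists>y\<in>F. qnorm J (\<lambda>t. a t * x t * a t - y t) < \<epsilon>"
        by (rule bexI[of _ "\<lambda>t. c * aa t"]) (use q1 q2 in \<open>simp_all add: w_def\<close>)
    qed
    thus "\<exists>F. finite F \<and> F \<subseteq> I0 \<and>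
        (\<forall>x\<in>I0. qnorm J x \<le> 1 \<longrightarrow> (\<exists>y\<in>F. qnorm J (\<lambda>t. a t * x t * a t - y t) < \<epsilon>))"
      using Ff FI by blast
  qed
  show "\<exists>a\<in>I0. a \<notin> J \<and> compact_elem I0 J a" using aI anJ ce by blast
qed

lemma K_sub:
  fixes K :: "('a::metric_space \<Rightarrow> complex) set"
  assumes Kid: "ideal_of C0 K" and Kh: "hypocompact K"
  shows "K \<subseteq> I0"
proof
  fix f :: "'a \<Rightarrow> complex" assume fK: "f \<in> K"
  have KC: "K \<subseteq> C0" and K0: "(\<lambda>x. 0) \<in> K"
    and Kadd: "\<And>f g. f \<in> K \<Longrightarrow> g \<in> K \<Longrightarrow> (\<lambda>x. f x + g x) \<in> K"
    and Kscale: "\<And>c f. f \<in> K \<Longrightarrow> (\<lambda>x. c * f x) \<in> K"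
    and Kmul: "\<And>a f. a \<in> C0 \<Longrightarrow> f \<in> K \<Longrightarrow> (\<lambda>x. a x * f x) \<in> K"
    using Kid unfolding ideal_of_def by auto
  show "f \<in> I0"
  proof (rule ccontr)
    assume fn: "f \<notin> I0"
    have fC: "f \<in> C0" using fK KC by blast
    define J where "J = {g\<in>K. \<forall>x\<in>perfect_part. g x = 0}"
    have JK: "J \<subseteq> K" unfolding J_def by blast
    have JC: "J \<subseteq> C0" using JK KC by blast
    have J0: "(\<lambda>x. 0) \<in> J" unfolding J_def using K0 by simp
    have Jne: "J \<noteq> {}" using J0 by blast
    have idl: "ideal_of K J"
      unfolding ideal_of_def
    proof (intro conjI)
      show "J \<subseteq> K" by (rule JK)
      show "(\<lambda>x. 0) \<in> J" by (rule J0)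
      show "\<forall>f\<in>J. \<forall>g\<in>J. (\<lambda>x. f x + g x) \<in> J"
        unfolding J_def using Kadd by simp
      show "\<forall>c. \<forall>f\<in>J. (\<lambda>x. c * f x) \<in> J"
        unfolding J_def using Kscale by simp
      show "\<forall>a\<in>K. \<forall>f\<in>J. (\<lambda>x. a x * f x) \<in> J \<and> (\<lambda>x. f x * a x) \<in> J"
      proof (intro ballI conjI)
        fix a g assume aK: "a \<in> K" and gJ: "g \<in> J"
        have aC: "a \<in> C0" using aK KC by blast
        have gK: "g \<in> K" and gz: "\<forall>x\<in>perfect_part. g x = 0" using gJ unfolding J_def by auto
        have "(\<lambda>x. a x * g x) \<in> K" by (rule Kmul[OF aC gK])
        thus "(\<lambda>x. a x * g x) \<in> J" unfolding J_def using gz by simp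
        hence "(\<lambda>x. g x * a x) \<in> K" using \<open>(\<lambda>x. a x * g x) \<in> K\<close> by (simp add: mult.commute)
        thus "(\<lambda>x. g x * a x) \<in> J" unfolding J_def using gz by simp
      qed
    qed
    have clo: "\<forall>h\<in>K. (\<forall>e>0. \<exists>g\<in>J. supn (\<lambda>x. h x - g x) < e) \<longrightarrow> h \<in> J"
    proof (intro ballI impI)
      fix h assume hK: "h \<in> K" and ap: "\<forall>e>0. \<exists>g\<in>J. supn (\<lambda>x. h x - g x) < e"
      have hC: "h \<in> C0" using hK KC by blast
      have "h x = 0" if x: "x \<in> perfect_part" for x
      proof (rule ccontr)
        assume "h x \<noteq> 0"
        hence "norm (h x) > 0" by simp
        then obtain g where gJ: "g \<in> J" and gs: "supn (\<lambda>x. h x - g x) < norm (h x)"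
          using ap by blast
        have "g x = 0" using gJ x unfolding J_def by blast
        hence "norm (h x) = norm (h x - g x)" by simp
        also have "\<dots> \<le> supn (\<lambda>x. h x - g x)"
          using gJ JC hC by (intro supn_ge bnd_diff C0_bnd) auto
        finally show False using gs by simp
      qed
      thus "h \<in> J" unfolding J_def using hK by blast
    qed
    have cl: "closed_ideal_of K J" unfolding closed_ideal_of_def using idl clo by blast
    have "\<exists>x\<in>perfect_part. f x \<noteq> 0" using fn fC unfolding I0_def by blast
    hence "f \<notin> J" unfolding J_def by blast
    hence "J \<noteq> K" using fK by blast
    then obtain a where aK: "a \<in> K" and anJ: "a \<notin> J" and ce: "compact_elem K J a"
      using Kh cl unfolding hypocompact_def by blast
    have aC: "a \<in> C0" using aK KC by blast
    obtain p where p: "p \<in> perfect_part" "a p \<noteq> 0" using anJ aK unfolding J_def by blast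
    define \<alpha> where "\<alpha> = norm (a p)"
    have \<alpha>: "\<alpha> > 0" unfolding \<alpha>_def using p by simp
    define M where "M = supn a"
    have aM: "norm (a t) \<le> M" for t unfolding M_def by (rule supn_ge[OF C0_bnd[OF aC]])
    have M: "M > 0" using aM[of p] \<alpha> unfolding \<alpha>_def by linarith
    have ac: "continuous_on UNIV a" by (rule C0_cont[OF aC])
    have Uo: "open {t. \<alpha>/2 < norm (a t)}"
      by (rule open_Collect_less[OF continuous_on_const continuous_on_norm[OF ac]])
    have "p \<in> {t. \<alpha>/2 < norm (a t)}" using \<alpha> unfolding \<alpha>_def by simp
    then obtain \<rho> where \<rho>: "\<rho> > 0" "ball p \<rho> \<subseteq> {t. \<alpha>/2 < norm (a t)}"
      using Uo by (meson openE)
    have inf: "infinite (perfect_part \<inter> ball p \<rho>)"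
      using pp_limpt[OF p(1)] \<rho>(1) unfolding islimpt_eq_infinite_ball by blast
    define c where "c = (\<alpha>/2)^4 / M^2"
    have c: "c > 0" unfolding c_def using \<alpha> M by simp
    define \<epsilon> where "\<epsilon> = c / 2"
    have \<epsilon>: "\<epsilon> > 0" unfolding \<epsilon>_def using c by simp
    have "\<exists>F. finite F \<and> F \<subseteq> K \<and> (\<forall>x\<in>K. qnorm J x \<le> 1 \<longrightarrow> (\<exists>y\<in>F. qnorm J (\<lambda>t. a t * x t * a t - y t) < \<epsilon>))"
      by (rule compact_elem_def[THEN iffD1, OF ce, rule_format, OF \<epsilon>])
    then obtain F where FF: "finite F \<and> F \<subseteq> K \<and> (\<forall>x\<in>K. qnorm J x \<le> 1 \<longrightarrow> (\<exists>y\<in>F. qnorm J (\<lambda>t. a t * x t * a t - y t) < \<epsilon>))" ..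
    have Ff: "finite F" using FF by (rule conjunct1)
    have FK: "F \<subseteq> K" using FF by (elim conjE)
    have Fp: "\<forall>x\<in>K. qnorm J x \<le> 1 \<longrightarrow> (\<exists>y\<in>F. qnorm J (\<lambda>t. a t * x t * a t - y t) < \<epsilon>)"
      using FF by (elim conjE)
    have "qnorm J (\<lambda>x::'a. 0) \<le> supn (\<lambda>x::'a. 0 - 0)" by (rule qnorm_le[OF J0 JC C0_zero])
    also have "\<dots> \<le> 1" by (rule supn_le) simp
    finally have q0: "qnorm J (\<lambda>x::'a. 0) \<le> 1" .
    have "\<exists>y\<in>F. qnorm J (\<lambda>t. a t * 0 * a t - y t) < \<epsilon>" using Fp[rule_format, OF K0 q0] by simp
    hence Fne: "F \<noteq> {}" by (elim bexE) auto
    hence cF: "card F \<ge> 1" using Ff by (simp add: Suc_le_eq card_gt_0_iff)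
    obtain S where Sf: "finite S" and Sc: "card S = Suc (card F)"
      and SS: "S \<subseteq> perfect_part \<inter> ball p \<rho>"
      using infinite_arbitrarily_large[OF inf] by blast
    define r where "r = (\<lambda>s. infdist s (S - {s}))"
    have r: "r s > 0" if s: "s \<in> S" for s
    proof -
      have "card (S - {s}) = card S - 1" using s Sf by simp
      hence "card (S - {s}) \<ge> 1" using Sc cF by simp
      hence "0 < card (S - {s})" by simp
      hence "S - {s} \<noteq> {}" using card_gt_0_iff by blast
      moreover have "closed (S - {s})" using Sf by (intro finite_imp_closed) simp
      ultimately show ?thesis unfolding r_def by (intro infdist_pos_not_in_closed) auto
    qed
    define b where "b = (\<lambda>s t. (1 / M^2) * max 0 (1 - dist t s / r s))"
    define xs where "xs = (\<lambda>s t. complex_of_real (b s t) * a t * a t)"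
    have b0: "0 \<le> b s t" for s t unfolding b_def using M by simp
    have b1: "b s t \<le> 1 / M^2" if "s \<in> S" for s t
    proof -
      have "0 \<le> dist t s / r s" using r[OF that] by simp
      hence "max 0 (1 - dist t s / r s) \<le> 1" by simp
      hence "(1 / M^2) * max 0 (1 - dist t s / r s) \<le> (1 / M^2) * 1"
        using M by (intro mult_left_mono) auto
      thus ?thesis unfolding b_def by simp
    qed
    have bs: "b s s = 1 / M^2" for s unfolding b_def by simp
    have bo: "b s t = 0" if "s \<in> S" "t \<in> S" "t \<noteq> s" for s t
    proof -
      have "r s \<le> dist s t" unfolding r_def using that by (intro infdist_le) auto
      hence "1 \<le> dist t s / r s" using r[OF that(1)] by (simp add: dist_commute le_divide_eq)
      thus ?thesis unfolding b_def by simp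
    qed
    have xsK: "xs s \<in> K" if s: "s \<in> S" for s
    proof -
      define a' where "a' = (\<lambda>t. complex_of_real (b s t) * a t)"
      have bc: "continuous_on UNIV (b s)"
        unfolding b_def by (intro continuous_intros) (use r[OF s] in auto)
      have a'C: "a' \<in> C0"
      proof (rule C0_weak[OF _ aC])
        show "continuous_on UNIV a'" unfolding a'_def using bc ac by (intro continuous_intros)
        fix e :: real assume e: "e > 0"
        show "\<exists>e'>0. \<forall>x. e \<le> norm (a' x) \<longrightarrow> e' \<le> norm (a x)"
        proof (intro exI[of _ "e * M^2"] conjI allI impI)
          show "0 < e * M^2" using e M by simp
          fix x assume ex: "e \<le> norm (a' x)"
          have "norm (a' x) = b s x * norm (a x)" unfolding a'_def using b0[of s x]
            by (simp add: norm_mult)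
          also have "\<dots> \<le> (1 / M^2) * norm (a x)" using b1[OF s] by (intro mult_right_mono) auto
          finally have "e \<le> norm (a x) / M^2" using ex by simp
          thus "e * M^2 \<le> norm (a x)" using M by (simp add: le_divide_eq)
        qed
      qed
      have "(\<lambda>t. a' t * a t) \<in> K" by (rule Kmul[OF a'C aK])
      thus ?thesis unfolding xs_def a'_def by simp
    qed
    have xsq: "qnorm J (xs s) \<le> 1" if s: "s \<in> S" for s
    proof -
      have xsC: "xs s \<in> C0" using xsK[OF s] KC by blast
      have "qnorm J (xs s) \<le> supn (\<lambda>t. xs s t - 0)" by (rule qnorm_le[OF J0 JC xsC])
      also have "\<dots> \<le> 1"
      proof (rule supn_le)
        fix t
        have "norm (xs s t - 0) = b s t * (norm (a t) * norm (a t))"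
          unfolding xs_def using b0[of s t] by (simp add: norm_mult)
        also have "\<dots> \<le> (1 / M^2) * (M * M)"
          using b1[OF s, of t] b0[of s t] aM[of t] less_imp_le[OF M]
          by (intro mult_mono) (auto intro: mult_mono)
        also have "\<dots> = 1" using M by (simp add: power2_eq_square)
        finally show "norm (xs s t - 0) \<le> 1" .
      qed
      finally show ?thesis .
    qed
    have "\<forall>s\<in>S. \<exists>y. y \<in> F \<and> qnorm J (\<lambda>t. a t * xs s t * a t - y t) < \<epsilon>"
    proof
      fix s assume s: "s \<in> S"
      show "\<exists>y. y \<in> F \<and> qnorm J (\<lambda>t. a t * xs s t * a t - y t) < \<epsilon>"
        using Fp[rule_format, OF xsK[OF s] xsq[OF s]] by (elim bexE) (intro exI conjI)
    qed
    hence "\<exists>\<phi>. \<forall>s\<in>S. \<phi> s \<in> F \<and> qnorm J (\<lambda>t. a t * xs s t * a t - \<phi> s t) < \<epsilon>"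
      by (rule bchoice)
    then obtain \<phi> where \<phi>0: "\<forall>s\<in>S. \<phi> s \<in> F \<and> qnorm J (\<lambda>t. a t * xs s t * a t - \<phi> s t) < \<epsilon>" ..
    have \<phi>: "\<phi> s \<in> F \<and> qnorm J (\<lambda>t. a t * xs s t * a t - \<phi> s t) < \<epsilon>" if "s \<in> S" for s
      using \<phi>0 that by (rule bspec)
    have "\<not> inj_on \<phi> S"
    proof
      assume "inj_on \<phi> S"
      moreover have "\<phi> ` S \<subseteq> F" using \<phi> by auto
      ultimately have "card S \<le> card F" using Ff by (rule card_inj_on_le)
      thus False using Sc by simp
    qed
    then obtain s1 s2 where s12: "s1 \<in> S" "s2 \<in> S" "s1 \<noteq> s2" "\<phi> s1 = \<phi> s2"
      unfolding inj_on_def by blast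
    define y where "y = \<phi> s1"
    have "y \<in> F" using \<phi>[OF s12(1)] unfolding y_def by (rule conjunct1)
    hence yC: "y \<in> C0" using FK KC by blast
    have s1p: "s1 \<in> perfect_part" using SS s12(1) by blast
    have Jv: "g s1 = 0" if "g \<in> J" for g using that s1p unfolding J_def by blast
    have w1: "norm (a s1 * xs s1 s1 * a s1 - y s1) < \<epsilon>"
    proof -
      have wC: "(\<lambda>t. a t * xs s1 t * a t - y t) \<in> C0"
        using xsK[OF s12(1)] KC by (intro C0_diff C0_mult aC yC) blast+
      have "norm (a s1 * xs s1 s1 * a s1 - y s1) \<le> qnorm J (\<lambda>t. a t * xs s1 t * a t - y t)"
        by (rule qnorm_pt[OF Jne JC wC Jv])
      thus ?thesis using \<phi>[OF s12(1)] unfolding y_def by simp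
    qed
    have w2: "norm (a s1 * xs s2 s1 * a s1 - y s1) < \<epsilon>"
    proof -
      have wC: "(\<lambda>t. a t * xs s2 t * a t - y t) \<in> C0"
        using xsK[OF s12(2)] KC by (intro C0_diff C0_mult aC yC) blast+
      have "norm (a s1 * xs s2 s1 * a s1 - y s1) \<le> qnorm J (\<lambda>t. a t * xs s2 t * a t - y t)"
        by (rule qnorm_pt[OF Jne JC wC Jv])
      thus ?thesis using \<phi>[OF s12(2)] s12(4) unfolding y_def by simp
    qed
    have "xs s2 s1 = 0" unfolding xs_def using bo[OF s12(2) s12(1) s12(3)] by simp
    hence ny: "norm (y s1) < \<epsilon>" using w2 by simp
    have "s1 \<in> ball p \<rho>" using SS s12(1) by blast
    hence as1: "\<alpha>/2 < norm (a s1)" using \<rho>(2) by blast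
    have "c \<le> norm (a s1 * xs s1 s1 * a s1)"
    proof -
      have "norm (a s1 * xs s1 s1 * a s1) = (norm (a s1))^4 / M^2"
        unfolding xs_def bs using M by (simp add: norm_mult norm_divide power4_eq_xxxx power2_eq_square)
      moreover have "(\<alpha>/2)^4 \<le> (norm (a s1))^4"
        using as1 \<alpha> by (intro power_mono) auto
      ultimately show ?thesis unfolding c_def using M by (simp add: divide_right_mono)
    qed
    also have "\<dots> \<le> norm (a s1 * xs s1 s1 * a s1 - y s1) + norm (y s1)"
      using norm_triangle_ineq2[of "a s1 * xs s1 s1 * a s1" "y s1"] by linarith
    also have "\<dots> < \<epsilon> + \<epsilon>" using w1 ny by simp
    finally show False unfolding \<epsilon>_def by simp
  qed
qed

theorem theorem2p2:
  assumes "locally_compact_space (euclidean :: 'a::metric_space topology)"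
  shows "hc_radical (C0 :: ('a \<Rightarrow> complex) set)
           = {f \<in> C0. \<forall>x\<in>perfect_part. f x = 0}"
proof -
  have P: "ideal_of C0 (I0::('a \<Rightarrow> complex) set) \<and> hypocompact (I0::('a \<Rightarrow> complex) set)
      \<and> (\<forall>K. ideal_of C0 K \<and> hypocompact K \<longrightarrow> K \<subseteq> (I0::('a \<Rightarrow> complex) set))"
    using I0_ideal hypo_I0[OF assms] K_sub by blast
  have "hc_radical (C0 :: ('a \<Rightarrow> complex) set) = I0"
    unfolding hc_radical_def
  proof (rule the_equality)
    show "ideal_of C0 (I0::('a \<Rightarrow> complex) set) \<and> hypocompact (I0::('a \<Rightarrow> complex) set)
      \<and> (\<forall>K. ideal_of C0 K \<and> hypocompact K \<longrightarrow> K \<subseteq> (I0::('a \<Rightarrow> complex) set))" by (rule P)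
  next
    fix I :: "('a \<Rightarrow> complex) set"
    assume I: "ideal_of C0 I \<and> hypocompact I \<and> (\<forall>K. ideal_of C0 K \<and> hypocompact K \<longrightarrow> K \<subseteq> I)"
    have "I \<subseteq> I0" using I K_sub by blast
    moreover have "I0 \<subseteq> I" using I P by blast
    ultimately show "I = I0" by blast
  qed
  thus ?thesis unfolding I0_def .
qed

end
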